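(* Let $\phi_C(t)=1/\cosh t$ (the hyperbolic-cosine characteristic function), whose Khintchine pair is $[0,m_C]$ with $m_C(dx)=\frac12\frac{|x|}{1+x^2}\frac{1}{\sinh(\pi|x|/2)}dx$. Its free analogue $\tilde\phi_C$ has Voiculescu transform $$V_{\tilde\phi_C}(it)=-it^2\int_0^\infty\log\cosh(s)\,e^{-ts}ds=i\big[1-t\beta(t/2)\big]=i\big[t\beta(t/2+1)-1\big],\qquad t>0.$$ Consequently, $\beta(s)+\beta(s+1)=1/s$ for all $s>0$.
   Context: $\beta(x):=\sum_{k=0}^\infty\frac{(-1)^k}{x+k}=\frac12[\psi(\frac{x+1}{2})-\psi(\frac x2)]$ for $x>0$, where $\psi=\Gamma'/\Gamma$ is the digamma function. For an infinitely divisible characteristic function $\phi$ with Khintchine exponent $\log\phi$, its free analogue $\tilde\phi$ is the $\boxplus$-infinitely divisible probability measure whose Voiculescu transform satisfies $V_{\tilde\phi}(it)=it^2\int_0^\infty\overline{\log\phi(s)}e^{-ts}ds$, $t>0$; if $\phi$ has Khintchine pair $[0,m]$ with $m$ symmetric, this equals $-it\int_{\mathbb{R}}\frac{1+x^2}{t^2+x^2}m(dx)$. *)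

theory Defs
  imports "HOL-Analysis.Analysis"
begin

definition beta_fn :: "real \<Rightarrow> real" where
  "beta_fn x = (\<Sum>k. (-1) ^ k / (x + real k))"

text \<open>Hyperbolic-cosine characteristic function and its Khintchine exponent
  (the distinguished continuous logarithm, which is the real log since phi_C > 0).\<close>
definition phi_C :: "real \<Rightarrow> real" where
  "phi_C s = 1 / cosh s"

definition log_phi_C :: "real \<Rightarrow> complex" where
  "log_phi_C s = complex_of_real (ln (phi_C s))"

definition free_voiculescu_it :: "(real \<Rightarrow> complex) \<Rightarrow> real \<Rightarrow> complex" where
  "free_voiculescu_it logphi t =
     \<i> * complex_of_real (t ^ 2) *
       (LBINT s:{0..}. cnj (logphi s) * complex_of_real (exp (- (t * s))))"

end

theory Submission
  imports Defs "HOL-Probability.Probability"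
begin

lemma beta_summable:
  assumes "x > 0" shows "summable (\<lambda>k. (-1::real) ^ k / (x + real k))"
proof -
  have "summable (\<lambda>k. (-1::real) ^ k * inverse (x + real k))"
  proof (rule summable_Leibniz'(1))
    show "(\<lambda>n. inverse (x + real n)) \<longlonglongrightarrow> 0"
      by (intro tendsto_inverse_0_at_top filterlim_tendsto_add_at_top[OF tendsto_const filterlim_real_sequentially])
  qed (use assms in \<open>auto intro!: le_imp_inverse_le\<close>)
  then show ?thesis by (simp add: divide_inverse)
qed

lemma beta_rec:
  assumes "s > 0" shows "beta_fn s + beta_fn (s + 1) = 1 / s"
proof -
  have sm: "summable (\<lambda>k. (-1::real) ^ k / (s + real k))" using beta_summable assms by auto
  have "beta_fn (s+1) = (\<Sum>k. - ((-1::real) ^ Suc k / (s + real (Suc k))))"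
    unfolding beta_fn_def by (intro suminf_cong) (simp add: add_ac)
  also have "\<dots> = - (\<Sum>k. (-1::real) ^ Suc k / (s + real (Suc k)))"
  proof -
    have "summable (\<lambda>k. (-1::real) ^ Suc k / (s + real (Suc k)))"
      using sm summable_Suc_iff[of "\<lambda>k. (-1::real) ^ k / (s + real k)"] by simp
    then show ?thesis by (rule suminf_minus)
  qed
  also have "\<dots> = - (beta_fn s - 1 / s)"
    unfolding beta_fn_def using suminf_split_head[OF sm] by simp
  finally show ?thesis by simp
qed

lemma moment:
  fixes a :: real and i :: nat assumes "a > 0"
  shows "has_bochner_integral lborel (\<lambda>x. indicator {0..} x * (x ^ i * exp (- (a * x)))) (fact i / a ^ (Suc i))"
proof (rule has_bochner_integral_nn_integral)
  have "(\<integral>\<^sup>+ x. ennreal (indicator {0..} x * (x ^ i * exp (- (a * x)))) \<partial>lborel)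
      = (\<integral>\<^sup>+ x. ennreal (1/a) * ennreal (erlang_density 0 a x * x ^ i) \<partial>lborel)"
    using assms by (intro nn_integral_cong) (auto simp: erlang_density_def ennreal_mult'[symmetric] split: split_indicator)
  also have "\<dots> = ennreal (1/a) * (\<integral>\<^sup>+ x. ennreal (erlang_density 0 a x * x ^ i) \<partial>lborel)"
    by (rule nn_integral_cmult) auto
  also have "\<dots> = ennreal (fact i / a ^ (Suc i))"
    using assms by (simp add: nn_integral_erlang_ith_moment ennreal_mult'[symmetric] divide_simps)
  finally show "(\<integral>\<^sup>+ x. ennreal (indicator {0..} x * (x ^ i * exp (- (a * x)))) \<partial>lborel) = ennreal (fact i / a ^ (Suc i))" .
qed (use assms in \<open>auto intro!: AE_I2 split: split_indicator\<close>)

lemma pointwise: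
  fixes t s :: real assumes "s > 0"
  shows "summable (\<lambda>n. norm ((-1::real)^n / real (Suc n) * exp (- ((t + 2 * real (Suc n)) * s))))"
    and "ln (cosh s) * exp (- (t * s)) = s * exp (- (t * s)) - ln 2 * exp (- (t * s))
          + (\<Sum>n. (-1::real)^n / real (Suc n) * exp (- ((t + 2 * real (Suc n)) * s)))"
proof -
  define q where "q = exp (-2 * s)"
  have q: "0 < q" "q < 1" using assms by (auto simp: q_def)
  have qpow: "q ^ Suc n = exp (- (2 * real (Suc n) * s))" for n
    unfolding q_def by (subst exp_of_nat_mult[symmetric]) (simp add: algebra_simps)
  have geo: "summable (\<lambda>n. q ^ Suc n)"
    using summable_geometric[of q] q by (simp add: summable_mult)
  have sumA: "summable (\<lambda>n. norm ((-1::real)^n * (1 / real (n + 1)) * (1 + q - 1) ^ Suc n))"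
    by (rule summable_comparison_test[OF _ geo]) (use q in \<open>auto intro!: exI[of _ 0] simp: abs_mult divide_simps\<close>)
  then have sumB: "summable (\<lambda>n. (-1::real)^n * (1 / real (n + 1)) * (1 + q - 1) ^ Suc n)"
    by (rule summable_norm_cancel)
  have E: "exp (- ((t + 2 * real (Suc n)) * s)) = q ^ Suc n * exp (- (t * s))" for n
    unfolding qpow by (simp add: exp_add[symmetric] algebra_simps)
  show "summable (\<lambda>n. norm ((-1::real)^n / real (Suc n) * exp (- ((t + 2 * real (Suc n)) * s))))"
    using summable_mult2[OF sumA, of "exp (- (t * s))"] unfolding E
    by (simp add: abs_mult mult_ac)
  have lnq: "ln (1 + q) = (\<Sum>n. (-1::real)^n * (1 / real (n + 1)) * (1 + q - 1) ^ Suc n)"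
    by (rule ln_series) (use q in auto)
  have "cosh s = exp s * (1 + q) / 2"
    unfolding cosh_def q_def by (simp add: algebra_simps exp_add[symmetric])
  then have lc: "ln (cosh s) = s - ln 2 + ln (1 + q)"
    using q by (simp only:) (simp add: ln_mult ln_div)
  have "ln (1 + q) * exp (- (t * s)) = (\<Sum>n. (-1::real)^n / real (Suc n) * exp (- ((t + 2 * real (Suc n)) * s)))"
    unfolding lnq E suminf_mult2[OF sumB] by (intro suminf_cong) simp
  then show "ln (cosh s) * exp (- (t * s)) = s * exp (- (t * s)) - ln 2 * exp (- (t * s))
          + (\<Sum>n. (-1::real)^n / real (Suc n) * exp (- ((t + 2 * real (Suc n)) * s)))"
    unfolding lc by (simp add: algebra_simps)
qed

lemma caseT: fixes t s :: real assumes "s > 0"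
  shows "indicator {0..} s * (s ^ 1 * exp (- (t * s))) - ln 2 * (indicator {0..} s * (s ^ 0 * exp (- (t * s)))) + (\<Sum>n. indicator {0..} s * ((-1::real)^n / real (Suc n) * exp (- ((t + 2 * real (Suc n)) * s))))
        = indicator {0..} s * (ln (cosh s) * exp (- (t * s)))"
  using pointwise(2)[OF assms, of t] assms by simp
lemma caseF: fixes t s :: real assumes "\<not> s > 0" "s \<noteq> 0"
  shows "indicator {0..} s * (s ^ 1 * exp (- (t * s))) - ln 2 * (indicator {0..} s * (s ^ 0 * exp (- (t * s)))) + (\<Sum>n. indicator {0..} s * ((-1::real)^n / real (Suc n) * exp (- ((t + 2 * real (Suc n)) * s))))
        = indicator {0..} s * (ln (cosh s) * exp (- (t * s)))"
  using assms by simp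

lemma gen: "(1 / a - 1 / b) / t = 1 / a * (1 / (2 * b))" if "a > 0" "b > 0" "b = a + t / 2" "t > 0" for a b t :: real
proof -
  have "(1 / a - 1 / b) / t * (2 * a * b) = (2 * b - 2 * a) / t"
    using that(1,2) by (simp add: divide_simps)
  also have "\<dots> = 1" using that(3,4) by simp
  also have "1 = 1 / a * (1 / (2 * b)) * (2 * a * b)" using that(1,2) by simp
  finally have "(1 / a - 1 / b) / t * (2 * a * b) = 1 / a * (1 / (2 * b)) * (2 * a * b)" .
  moreover have "2 * a * b \<noteq> 0" using that(1,2) by simp
  ultimately show ?thesis by (rule mult_right_cancel[THEN iffD1, rotated])
qed
lemma gen2: "(c / a - c / b) / t = c * ((1 / a - 1 / b) / t)" for a b c t :: real
  by (simp add: diff_divide_distrib right_diff_distrib)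
lemma X: fixes t :: real assumes t: "t > 0" shows "((-1::real)^n / real (Suc n) - (-1::real)^n / (t/2 + 1 + real n)) / t
      = (-1)^n / real (Suc n) * (1 / (t + 2 * real (Suc n)))"
proof -
  have key: "(1 / real (Suc n) - 1 / (t/2 + 1 + real n)) / t = 1 / real (Suc n) * (1 / (2 * (t/2 + 1 + real n)))"
  proof (rule gen)
    have s1: "real (Suc n) = real n + 1" "real n \<ge> 0" by simp_all
    show "0 < real (Suc n)" using s1 by linarith
    show "0 < t / 2 + 1 + real n" using s1 t by linarith
    show "t / 2 + 1 + real n = real (Suc n) + t / 2" using s1 by linarith
  qed (rule t)
  have s1: "real (Suc n) = real n + 1" by simp
  have e2: "2 * (t/2 + 1 + real n) = t + 2 * real (Suc n)" by (simp add: algebra_simps)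
  show ?thesis unfolding gen2[of "(-1)^n"] key e2 by (simp only: divide_inverse mult_1_left mult.assoc)
qed

lemma main_int:
  fixes t :: real assumes t: "t > 0"
  shows "has_bochner_integral lborel (\<lambda>s. indicator {0..} s * (ln (cosh s) * exp (- (t * s))))
           (1 / t^2 - beta_fn (t/2 + 1) / t)"
proof -
  define f where "f n s = indicator {0..} s * ((-1::real)^n / real (Suc n) * exp (- ((t + 2 * real (Suc n)) * s)))" for n s
  have hf: "has_bochner_integral lborel (f n) ((-1)^n / real (Suc n) * (1 / (t + 2 * real (Suc n))))" for n
  proof -
    have "has_bochner_integral lborel (\<lambda>x. (-1::real)^n / real (Suc n) * (indicator {0..} x * (x ^ 0 * exp (- ((t + 2 * real (Suc n)) * x)))))
         ((-1)^n / real (Suc n) * (fact 0 / (t + 2 * real (Suc n)) ^ Suc 0))"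
      by (intro has_bochner_integral_mult_right moment) (use t in auto)
    then show ?thesis unfolding f_def by (simp add: mult_ac)
  qed
  have nf: "has_bochner_integral lborel (\<lambda>s. norm (f n s)) (1 / real (Suc n) * (1 / (t + 2 * real (Suc n))))" for n
  proof -
    have "has_bochner_integral lborel (\<lambda>x. 1 / real (Suc n) * (indicator {0..} x * (x ^ 0 * exp (- ((t + 2 * real (Suc n)) * x)))))
         (1 / real (Suc n) * (fact 0 / (t + 2 * real (Suc n)) ^ Suc 0))"
      by (intro has_bochner_integral_mult_right moment) (use t in auto)
    moreover have "norm (f n s) = 1 / real (Suc n) * (indicator {0..} s * (s ^ 0 * exp (- ((t + 2 * real (Suc n)) * s))))" for s
      unfolding f_def by (simp add: abs_mult split: split_indicator)
    ultimately show ?thesis by simp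
  qed
  have int_f: "integrable lborel (f n)" for n using hf[of n] by (auto simp: has_bochner_integral_iff)
  have sq: "summable (\<lambda>n. inverse (real (Suc n) ^ 2))"
    using inverse_power_summable[of 2, where 'a=real] summable_Suc_iff[of "\<lambda>n. inverse (real n ^ 2)"] by simp
  have sumnorm: "summable (\<lambda>n. \<integral>s. norm (f n s) \<partial>lborel)"
    unfolding has_bochner_integral_integral_eq[OF nf]
  proof (rule summable_comparison_test[OF _ sq], intro exI[of _ 0] allI impI)
    fix n :: nat
    have "real (Suc n) ^ 2 \<le> real (Suc n) * (t + 2 * real (Suc n))"
      using t by (simp add: power2_eq_square algebra_simps)
    then show "norm (1 / real (Suc n) * (1 / (t + 2 * real (Suc n)))) \<le> inverse (real (Suc n) ^ 2)"
      using t by (simp add: divide_simps)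
  qed
  have AEs: "AE s in lborel. summable (\<lambda>n. norm (f n s))"
    using AE_lborel_singleton[of 0]
  proof eventually_elim
    case (elim s)
    show ?case
    proof (cases "s > 0")
      case True then show ?thesis using pointwise(1)[OF True, of t] unfolding f_def by simp
    next
      case False then show ?thesis using elim unfolding f_def by simp
    qed
  qed
  have hS: "has_bochner_integral lborel (\<lambda>s. \<Sum>n. f n s) (\<Sum>n. (-1)^n / real (Suc n) * (1 / (t + 2 * real (Suc n))))"
    using integrable_suminf[OF int_f AEs sumnorm] integral_suminf[OF int_f AEs sumnorm]
      has_bochner_integral_integral_eq[OF hf]
    by (simp add: has_bochner_integral_iff)
  have b1: "(\<lambda>n. (-1::real)^n / (t/2 + 1 + real n)) sums beta_fn (t/2 + 1)"
    unfolding beta_fn_def using beta_summable[of "t/2+1"] t by (simp add: summable_sums)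
  have "(\<lambda>n. ((-1::real)^n / real (Suc n) - (-1::real)^n / (t/2 + 1 + real n)) / t) sums ((ln 2 - beta_fn (t/2 + 1)) / t)"
    by (intro sums_divide sums_diff alternating_harmonic_series_sums b1)
  then have "(\<lambda>n. (-1)^n / real (Suc n) * (1 / (t + 2 * real (Suc n)))) sums ((ln 2 - beta_fn (t/2 + 1)) / t)"
    by (simp only: X[OF t])
  then have ssum: "(\<Sum>n. (-1)^n / real (Suc n) * (1 / (t + 2 * real (Suc n)))) = (ln 2 - beta_fn (t/2 + 1)) / t"
    by (rule sums_unique[symmetric])
  have h1: "has_bochner_integral lborel (\<lambda>s. indicator {0..} s * (s ^ 1 * exp (- (t * s)))) (fact 1 / t ^ Suc 1)"
    by (rule moment) (use t in auto)
  have h0: "has_bochner_integral lborel (\<lambda>s. ln 2 * (indicator {0..} s * (s ^ 0 * exp (- (t * s))))) (ln 2 * (fact 0 / t ^ Suc 0))"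
    by (intro has_bochner_integral_mult_right moment) (use t in auto)
  have all: "has_bochner_integral lborel (\<lambda>s. indicator {0..} s * (s ^ 1 * exp (- (t * s))) - ln 2 * (indicator {0..} s * (s ^ 0 * exp (- (t * s)))) + (\<Sum>n. f n s))
      (fact 1 / t ^ Suc 1 - ln 2 * (fact 0 / t ^ Suc 0) + (ln 2 - beta_fn (t/2 + 1)) / t)"
    using has_bochner_integral_add[OF has_bochner_integral_diff[OF h1 h0] hS[unfolded ssum]] .
  have val: "fact 1 / t ^ Suc 1 - ln 2 * (fact 0 / t ^ Suc 0) + (ln 2 - beta_fn (t/2 + 1)) / t = 1 / t^2 - beta_fn (t/2 + 1) / t"
    using t by (simp add: field_simps power2_eq_square)
  show ?thesis
  proof (rule has_bochner_integral_cong_AE[THEN iffD1, OF _ _ _ all[unfolded val]])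
    show "AE s in lborel. indicator {0..} s * (s ^ 1 * exp (- (t * s))) - ln 2 * (indicator {0..} s * (s ^ 0 * exp (- (t * s)))) + (\<Sum>n. f n s)
        = indicator {0..} s * (ln (cosh s) * exp (- (t * s)))"
      using AE_lborel_singleton[of 0]
    proof eventually_elim
      case (elim s)
      show ?case
      proof (cases "s > 0")
        case True then show ?thesis unfolding f_def by (rule caseT)
      next
        case False then show ?thesis using elim unfolding f_def by (intro caseF) auto
      qed
    qed
  next
    show "(\<lambda>s. indicator {0..} s * (s ^ 1 * exp (- (t * s))) - ln 2 * (indicator {0..} s * (s ^ 0 * exp (- (t * s)))) + (\<Sum>n. f n s)) \<in> borel_measurable lborel"
      using all by (rule borel_measurable_has_bochner_integral)
  next
    have "continuous_on UNIV (\<lambda>s::real. ln (cosh s) * exp (- (t * s)))"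
      by (intro continuous_intros) (auto simp: cosh_real_pos)
    then have m: "(\<lambda>s::real. ln (cosh s) * exp (- (t * s))) \<in> borel_measurable borel"
      by (rule borel_measurable_continuous_onI)
    show "(\<lambda>s. indicator {0..} s * (ln (cosh s) * exp (- (t * s)))) \<in> borel_measurable lborel"
      unfolding measurable_lborel2
      by (rule borel_measurable_times[OF borel_measurable_indicator m]) simp
  qed
qed

lemma ig: "cnj (log_phi_C s) * complex_of_real (exp (- (t * s))) = complex_of_real (- (ln (cosh s) * exp (- (t * s))))" for s
proof -
  have "ln (phi_C s) = - ln (cosh s)" unfolding phi_C_def using cosh_real_pos[of s] by (simp add: ln_div)
  then show ?thesis unfolding log_phi_C_def by simp
qed
lemma tI: assumes "has_bochner_integral lborel (\<lambda>s. indicator {0..} s * (ln (cosh s) * exp (- (t * s)))) (1 / t^2 - beta_fn (t/2 + 1) / t)"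
  shows "(LBINT s:{0..}. ln (cosh s) * exp (- (t * s))) = 1 / t^2 - beta_fn (t/2 + 1) / t"
  unfolding set_lebesgue_integral_def real_scaleR_def by (rule has_bochner_integral_integral_eq[OF assms])
theorem corollary2:
  shows "(\<forall>t::real. t > 0 \<longrightarrow>
            free_voiculescu_it log_phi_C t
              = - \<i> * complex_of_real (t ^ 2) *
                  complex_of_real (LBINT s:{0..}. ln (cosh s) * exp (- (t * s)))
          \<and> free_voiculescu_it log_phi_C t = \<i> * complex_of_real (1 - t * beta_fn (t / 2))
          \<and> free_voiculescu_it log_phi_C t = \<i> * complex_of_real (t * beta_fn (t / 2 + 1) - 1))
       \<and> (\<forall>s::real. s > 0 \<longrightarrow> beta_fn s + beta_fn (s + 1) = 1 / s)"
proof (intro conjI allI impI)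
  fix s :: real assume "s > 0" then show "beta_fn s + beta_fn (s + 1) = 1 / s" by (rule beta_rec)
next
  fix t :: real assume t: "t > 0"
  define I where "I = (LBINT s:{0..}. ln (cosh s) * exp (- (t * s)))"
  have I: "I = 1 / t^2 - beta_fn (t/2 + 1) / t"
    unfolding I_def by (rule tI[OF main_int[OF t]])
  have V: "free_voiculescu_it log_phi_C t = \<i> * complex_of_real (t ^ 2) * complex_of_real (- I)"
  proof -
    have "(LBINT s:{0..}. cnj (log_phi_C s) * complex_of_real (exp (- (t * s))))
        = integral\<^sup>L lborel (\<lambda>s. complex_of_real (- (indicator {0..} s * (ln (cosh s) * exp (- (t * s))))))"
      unfolding ig set_lebesgue_integral_def by (intro Bochner_Integration.integral_cong refl) (simp split: split_indicator)
    also have "\<dots> = complex_of_real (- I)"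
      unfolding integral_complex_of_real integral_minus I_def set_lebesgue_integral_def real_scaleR_def ..
    finally show ?thesis unfolding free_voiculescu_it_def by simp
  qed
  show "free_voiculescu_it log_phi_C t = - \<i> * complex_of_real (t ^ 2) *
                  complex_of_real (LBINT s:{0..}. ln (cosh s) * exp (- (t * s)))"
    unfolding V I_def by simp
  have e3: "t ^ 2 * (- I) = t * beta_fn (t / 2 + 1) - 1"
    unfolding I using t by (simp add: field_simps power2_eq_square)
  show V3: "free_voiculescu_it log_phi_C t = \<i> * complex_of_real (t * beta_fn (t / 2 + 1) - 1)"
    unfolding V mult.assoc of_real_mult[symmetric] e3 ..
  have "beta_fn (t/2) + beta_fn (t/2 + 1) = 1 / (t/2)" using t by (intro beta_rec) simp
  then have "t * beta_fn (t / 2 + 1) - 1 = 1 - t * beta_fn (t / 2)"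
    using t by (simp add: field_simps)
  then show "free_voiculescu_it log_phi_C t = \<i> * complex_of_real (1 - t * beta_fn (t / 2))"
    using V3 by simp
qed
end
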